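(* Let $A=e\int_0^1 \frac{e^{-1/x}}{x}\,dx$. Let $b_1=b_2=1$, $b_3=b_4=2$, $b_5=b_6=3$, and in general $b_{2j-1}=b_{2j}=j$ for $j\ge1$. Put $R_0=1$ and, for $N\ge1$, $$R_N=\cfrac{1}{1+\cfrac{b_1}{1+\cfrac{b_2}{\ddots\,1+\cfrac{b_{N-1}}{1+b_N}}}}.$$ Then $R_N\to A$ as $N\to\infty$, i.e. $$A=\cfrac{1}{1+\cfrac{1}{1+\cfrac{1}{1+\cfrac{2}{1+\cfrac{2}{1+\cfrac{3}{1+\cfrac{3}{1+\cdots}}}}}}},$$ and the approximants alternate about $A$: $R_N>A$ for every even $N\ge0$ and $R_N<A$ for every odd $N\ge1$ (so $R_1=\tfrac12$, $R_3=\tfrac47$, $R_5=\tfrac{20}{34},\dots$ lie below $A$ and $R_0=1$, $R_2=\tfrac23$, $R_4=\tfrac8{13},\dots$ lie above $A$).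
   Context: $e$ is the base of the natural logarithm. *)

theory Defs
  imports "HOL-Analysis.Analysis"
begin

definition A_const :: real where
  "A_const = exp 1 * integral {0..1} (\<lambda>x::real. exp (- 1 / x) / x)"

definition bseq :: "nat \<Rightarrow> real" where
  "bseq j = real ((j + 1) div 2)"

fun cf_tail :: "(nat \<Rightarrow> real) \<Rightarrow> nat \<Rightarrow> nat \<Rightarrow> real" where
  "cf_tail b k 0 = 1"
| "cf_tail b k (Suc m) = 1 + b k / cf_tail b (Suc k) m"

definition R :: "nat \<Rightarrow> real" where
  "R N = 1 / cf_tail bseq 1 N"

end

theory Submission
  imports Defs "HOL-Real_Asymp.Real_Asymp"
begin

definition gg :: "nat \<Rightarrow> nat \<Rightarrow> real \<Rightarrow> real" where
  "gg m p x = exp (- 1 / x) * (1 - x) ^ m / x ^ p"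

definition GG :: "nat \<Rightarrow> nat \<Rightarrow> real" where
  "GG m p = integral {0..1} (gg m p)"

lemma lim_p: "p \<in> {1,2} \<Longrightarrow> ((\<lambda>x::real. exp (- 1 / x) / x ^ p) \<longlongrightarrow> 0) (at_right 0)"
proof -
  assume "p \<in> {1,2}"
  moreover have "((\<lambda>x::real. exp (- 1 / x) / x ^ 2) \<longlongrightarrow> 0) (at_right 0)" by real_asymp
  moreover have "((\<lambda>x::real. exp (- 1 / x) / x ^ 1) \<longlongrightarrow> 0) (at_right 0)" by real_asymp
  ultimately show ?thesis by auto
qed

lemma cont_gg: assumes "p \<in> {1,2}" shows "continuous_on {0..1} (gg m p)"
  unfolding continuous_on_eq_continuous_within
proof
  fix x :: real assume x: "x \<in> {0..1}"
  show "continuous (at x within {0..1}) (gg m p)"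
  proof (cases "x = 0")
    case True
    have "((\<lambda>x::real. exp (- 1 / x) / x ^ p * (1 - x) ^ m) \<longlongrightarrow> 0 * (1 - 0) ^ m) (at_right 0)"
      by (intro tendsto_mult lim_p assms tendsto_intros)
    moreover have "gg m p = (\<lambda>x::real. exp (- 1 / x) / x ^ p * (1 - x) ^ m)"
      by (auto simp: fun_eq_iff gg_def)
    ultimately have "(gg m p \<longlongrightarrow> gg m p 0) (at_right 0)"
      using assms by (auto simp: gg_def)
    then show ?thesis using True by (simp add: continuous_within at_within_Icc_at_right)
  next
    case False
    then have "isCont (gg m p) x" unfolding gg_def by (intro continuous_intros) auto
    then show ?thesis by (rule continuous_at_imp_continuous_within)
  qed
qed

lemma int_gg: "p \<in> {1,2} \<Longrightarrow> gg m p integrable_on {0..1}"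
  by (intro integrable_continuous_interval cont_gg)

lemma gg_nonneg: "x \<in> {0..1} \<Longrightarrow> 0 \<le> gg m p x"
  by (auto simp: gg_def)

lemma GG_pos: assumes "p \<in> {1,2}" shows "GG m p > 0"
proof -
  have "GG m p \<ge> 0" unfolding GG_def by (intro integral_nonneg int_gg assms) (auto simp: gg_nonneg)
  moreover have "GG m p \<noteq> 0"
  proof
    assume "GG m p = 0"
    then have "\<forall>x\<in>{0..1}. gg m p x = 0" unfolding GG_def
      using integral_eq_0_iff[of 0 1 "gg m p"] cont_gg[OF assms] gg_nonneg by auto
    then have "gg m p (1/2) = 0" by auto
    then show False by (simp add: gg_def)
  qed
  ultimately show ?thesis by auto
qed

lemma GG_S: "GG j 2 = GG j 1 + GG (Suc j) 2"
proof -
  have "GG j 1 + GG (Suc j) 2 = integral {0..1} (\<lambda>x. gg j 1 x + gg (Suc j) 2 x)"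
    unfolding GG_def by (rule integral_add[symmetric]) (auto intro: int_gg)
  also have "\<dots> = GG j 2" unfolding GG_def
  proof (rule integral_cong)
    fix x :: real assume "x \<in> {0..1}"
    show "gg j 1 x + gg (Suc j) 2 x = gg j 2 x"
      by (cases "x = 0") (auto simp: gg_def field_simps power2_eq_square)
  qed
  finally show ?thesis by simp
qed

definition FF :: "nat \<Rightarrow> real \<Rightarrow> real" where
  "FF m x = (if x = 0 then 0 else exp (- 1 / x) * (1 - x) ^ m)"

lemma FF_deriv: assumes "x > 0"
  shows "(FF m has_field_derivative
     (exp (- 1 / x) * (1 - x) ^ m / x ^ 2 - real m * exp (- 1 / x) * (1 - x) ^ (m - 1))) (at x)"
proof -
  have "((\<lambda>x. exp (- 1 / x) * (1 - x) ^ m) has_field_derivative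
     (exp (- 1 / x) * (1 - x) ^ m / x ^ 2 - real m * exp (- 1 / x) * (1 - x) ^ (m - 1))) (at x)"
    using assms by (auto intro!: derivative_eq_intros simp: field_simps power2_eq_square)
  then show ?thesis
    by (rule has_field_derivative_transform_within_open[where S="{0<..}"]) (use assms in \<open>auto simp: FF_def\<close>)
qed

lemma FF_cont: "continuous_on {0..1} (FF m)"
  unfolding continuous_on_eq_continuous_within
proof
  fix x :: real assume x: "x \<in> {0..1}"
  show "continuous (at x within {0..1}) (FF m)"
  proof (cases "x = 0")
    case True
    have "((\<lambda>x::real. exp (- 1 / x) * (1 - x) ^ m) \<longlongrightarrow> 0 * (1 - 0) ^ m) (at_right 0)"
      by (intro tendsto_mult tendsto_intros) real_asymp
    then have "((\<lambda>x::real. exp (- 1 / x) * (1 - x) ^ m) \<longlongrightarrow> 0) (at_right 0)" by simp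
    moreover have "eventually (\<lambda>x. exp (- 1 / x) * (1 - x) ^ m = FF m x) (at_right (0::real))"
      using eventually_at_right_less[of 0] by (rule eventually_mono) (auto simp: FF_def)
    ultimately have "(FF m \<longlongrightarrow> 0) (at_right 0)"
      by (rule Lim_transform_eventually)
    then have "(FF m \<longlongrightarrow> FF m 0) (at_right 0)" by (simp add: FF_def)
    then show ?thesis using True by (simp add: continuous_within at_within_Icc_at_right)
  next
    case False
    then have "isCont (FF m) x" using x FF_deriv[of x m] DERIV_isCont by auto
    then show ?thesis by (rule continuous_at_imp_continuous_within)
  qed
qed

lemma FF_int: "((\<lambda>x. exp (- 1 / x) * (1 - x) ^ m / x ^ 2 - real m * exp (- 1 / x) * (1 - x) ^ (m - 1))
   has_integral (FF m 1 - FF m 0)) {0..1}"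
proof (rule fundamental_theorem_of_calculus_interior)
  fix x :: real assume "x \<in> {0<..<1}"
  then show "(FF m has_vector_derivative exp (- 1 / x) * (1 - x) ^ m / x ^ 2 - real m * exp (- 1 / x) * (1 - x) ^ (m - 1)) (at x)"
    using FF_deriv[of x m] by (simp add: has_real_derivative_iff_has_vector_derivative)
qed (auto intro: FF_cont)

lemma GG_N: "exp 1 * GG 0 2 = 1"
proof -
  have "(gg 0 2 has_integral exp (-1)) {0..1}"
  proof -
    have "gg 0 2 = (\<lambda>x. exp (- 1 / x) * (1 - x) ^ 0 / x ^ 2 - real 0 * exp (- 1 / x) * (1 - x) ^ (0 - 1))"
      by (auto simp: fun_eq_iff gg_def)
    then show ?thesis using FF_int[of 0] by (simp add: FF_def)
  qed
  then have "GG 0 2 = exp (-1)" unfolding GG_def by (rule integral_unique)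
  then show ?thesis by (simp add: exp_minus)
qed

lemma GG_B: "real (Suc j) * GG j 1 = GG (Suc j) 2 + real (Suc j) * GG (Suc j) 1"
proof -
  have "((\<lambda>x. gg (Suc j) 2 x - real (Suc j) * (gg j 1 x - gg (Suc j) 1 x)) has_integral 0) {0..1}"
  proof -
    have "((\<lambda>x. exp (- 1 / x) * (1 - x) ^ Suc j / x ^ 2 - real (Suc j) * exp (- 1 / x) * (1 - x) ^ (Suc j - 1))
       has_integral 0) {0..1}" using FF_int[of "Suc j"] by (simp add: FF_def)
    then show ?thesis
    proof (rule has_integral_spike[where S="{0}", rotated 2])
      fix x :: real assume "x \<in> {0..1} - {0}"
      then show "gg (Suc j) 2 x - real (Suc j) * (gg j 1 x - gg (Suc j) 1 x) =
        exp (- 1 / x) * (1 - x) ^ Suc j / x ^ 2 - real (Suc j) * exp (- 1 / x) * (1 - x) ^ (Suc j - 1)"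
        by (auto simp: gg_def field_simps)
    qed auto
  qed
  then have "integral {0..1} (\<lambda>x. gg (Suc j) 2 x - real (Suc j) * (gg j 1 x - gg (Suc j) 1 x)) = 0"
    by (rule integral_unique)
  moreover have "integral {0..1} (\<lambda>x. gg (Suc j) 2 x - real (Suc j) * (gg j 1 x - gg (Suc j) 1 x))
     = GG (Suc j) 2 - real (Suc j) * (GG j 1 - GG (Suc j) 1)"
    unfolding GG_def
    by (subst integral_diff integral_mult_right integral_diff; auto intro!: int_gg integrable_diff integrable_on_cmult_left)+
  ultimately show ?thesis by (simp add: algebra_simps)
qed

definition yy :: "nat \<Rightarrow> real" where
  "yy k = exp 1 * (if even k then GG (k div 2) 2 else GG (k div 2) 1) / fact (k div 2)"

lemma yy_pos: "yy k > 0"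
  unfolding yy_def by (auto intro!: divide_pos_pos mult_pos_pos GG_pos)

lemma yy_even: "yy (2*j) = exp 1 * GG j 2 / fact j" by (simp add: yy_def)
lemma yy_odd: "yy (Suc (2*j)) = exp 1 * GG j 1 / fact j" by (simp add: yy_def)
lemma bseq_odd: "bseq (Suc (2*j)) = real (Suc j)" by (simp add: bseq_def)
lemma bseq_even: "bseq (Suc (Suc (2*j))) = real (Suc j)" by (simp add: bseq_def)

lemma fpos: "fact j + fact j * real j > (0::real)"
  using fact_gt_zero[of j] by (smt (verit) mult_nonneg_nonneg of_nat_0_le_iff fact_ge_zero)

lemma yy_rec: "yy k = yy (Suc k) + bseq (Suc k) * yy (Suc (Suc k))"
proof (cases "even k")
  case True
  then obtain j where k: "k = 2*j" by (auto elim: evenE)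
  have e: "Suc (Suc (2*j)) = 2 * Suc j" by simp
  have h: "real (Suc j) * (exp 1 * GG (Suc j) 2 / fact (Suc j)) = exp 1 * GG (Suc j) 2 / fact j"
    by (simp add: fact_Suc del: of_nat_Suc)
  show ?thesis unfolding k e yy_even yy_odd bseq_odd h
    using GG_S[of j] by (simp add: add_divide_distrib[symmetric] algebra_simps)
next
  case False
  then obtain j where k: "k = Suc (2*j)" by (auto elim: oddE)
  have e: "Suc (Suc k) = Suc (2 * Suc j)" "Suc k = 2 * Suc j" using k by simp_all
  have y1: "yy k = exp 1 * GG j 1 / fact j" using k yy_odd by simp
  have y2: "yy (Suc k) = exp 1 * GG (Suc j) 2 / fact (Suc j)" using e yy_even by metis
  have y3: "yy (Suc (Suc k)) = exp 1 * GG (Suc j) 1 / fact (Suc j)" using e yy_odd by metis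
  have b: "bseq (Suc k) = real (Suc j)" using k bseq_even by simp
  have fs: "(fact (Suc j) :: real) = real (Suc j) * fact j" by (simp add: fact_Suc del: of_nat_Suc)
  have "yy (Suc k) + bseq (Suc k) * yy (Suc (Suc k))
     = exp 1 * (GG (Suc j) 2 + real (Suc j) * GG (Suc j) 1) / (real (Suc j) * fact j)"
    unfolding y2 y3 b fs by (simp add: add_divide_distrib algebra_simps)
  also have "\<dots> = exp 1 * (real (Suc j) * GG j 1) / (real (Suc j) * fact j)"
    using GG_B[of j] by simp
  also have "\<dots> = yy k" unfolding y1 by (simp del: of_nat_Suc)
  finally show ?thesis by simp
qed

lemma yy_0: "yy 0 = 1" using GG_N by (simp add: yy_def)
lemma yy_1: "yy 1 = A_const"
proof -
  have "gg 0 1 = (\<lambda>x::real. exp (- 1 / x) / x)" by (auto simp: fun_eq_iff gg_def)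
  then show ?thesis by (simp add: yy_def A_const_def GG_def)
qed

fun Zc :: "nat \<Rightarrow> nat \<Rightarrow> real \<times> real" where
  "Zc k 0 = (1, 1)"
| "Zc k (Suc m) = (case Zc (Suc k) m of (u, v) \<Rightarrow> (u + bseq k * v, u))"

lemma bseq_nonneg: "bseq k \<ge> 0" by (simp add: bseq_def)

lemma Zc_ge1: "fst (Zc k m) \<ge> 1 \<and> snd (Zc k m) \<ge> 1"
proof (induction m arbitrary: k)
  case 0 then show ?case by simp
next
  case (Suc m)
  obtain u v where uv: "Zc (Suc k) m = (u, v)" by (cases "Zc (Suc k) m")
  then show ?case using Suc[of "Suc k"] bseq_nonneg[of k]
    by (simp add: add_increasing2)
qed

lemma cf_Zc: "cf_tail bseq k m = fst (Zc k m) / snd (Zc k m)"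
proof (induction m arbitrary: k)
  case 0 then show ?case by simp
next
  case (Suc m)
  obtain u v where uv: "Zc (Suc k) m = (u, v)" by (cases "Zc (Suc k) m")
  have u: "u \<ge> 1" and v: "v \<ge> 1" using Zc_ge1[of "Suc k" m] uv by auto
  have c: "cf_tail bseq (Suc k) m = u / v" using Suc[of "Suc k"] uv by simp
  have "cf_tail bseq k (Suc m) = 1 + bseq k * v / u" using u v by (simp add: c)
  also have "\<dots> = (u + bseq k * v) / u" using u by (simp add: field_simps)
  finally show ?case using uv by simp
qed

lemma Zc_cas: "Zc (Suc k) m = (u, v) \<Longrightarrow>
  yy k * v - yy (Suc k) * u = (-1) ^ m * (\<Prod>i<m. bseq (Suc k + i)) * (yy (k + m) - yy (Suc (k + m)))"
proof (induction m arbitrary: k u v)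
  case 0 then show ?case by simp
next
  case (Suc m)
  obtain u' v' where uv: "Zc (Suc (Suc k)) m = (u', v')" by (cases "Zc (Suc (Suc k)) m")
  have IH: "yy (Suc k) * v' - yy (Suc (Suc k)) * u' = (-1) ^ m * (\<Prod>i<m. bseq (Suc (Suc k) + i)) * (yy (Suc k + m) - yy (Suc (Suc k + m)))"
    using Suc.IH[OF uv] .
  have e: "u = u' + bseq (Suc k) * v'" "v = u'" using Suc.prems uv by auto
  have p: "(\<Prod>i<Suc m. bseq (Suc k + i)) = bseq (Suc k) * (\<Prod>i<m. bseq (Suc (Suc k) + i))"
    by (simp add: prod.lessThan_Suc_shift del: prod.lessThan_Suc)
  have "yy k * v - yy (Suc k) * u = - bseq (Suc k) * (yy (Suc k) * v' - yy (Suc (Suc k)) * u')"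
    unfolding e using yy_rec[of k] by (simp add: algebra_simps)
  then show ?case unfolding IH p by (simp add: algebra_simps)
qed

abbreviation PP :: "nat \<Rightarrow> real" where "PP N \<equiv> \<Prod>i<N. bseq (Suc i)"

lemma bseq_Suc_pos: "bseq (Suc i) > 0" by (simp add: bseq_def)

lemma PP_pos: "PP N > 0" by (intro prod_pos) (auto intro: bseq_Suc_pos)

lemma R_err: "R N - A_const = (-1) ^ N * PP N * (yy N - yy (Suc N)) / fst (Zc 1 N)"
proof -
  obtain u v where uv: "Zc 1 N = (u, v)" by (cases "Zc 1 N")
  have u: "u \<ge> 1" and v: "v \<ge> 1" using Zc_ge1[of 1 N] uv by auto
  have c: "v - A_const * u = (-1) ^ N * PP N * (yy N - yy (Suc N))"
    using Zc_cas[of 0 N u v] uv yy_0 yy_1 by simp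
  have "R N = v / u" using uv u v by (simp add: R_def cf_Zc)
  then have "R N - A_const = (v - A_const * u) / u" using u by (simp add: field_simps)
  then show ?thesis using uv c by simp
qed

lemma diff_pos: "yy N - yy (Suc N) > 0"
  using yy_rec[of N] bseq_Suc_pos[of N] yy_pos[of "Suc (Suc N)"] by simp

lemma Zc_two: "fst (Zc k (Suc (Suc m))) \<ge> bseq k * fst (Zc (Suc (Suc k)) m)"
proof -
  obtain u v where uv: "Zc (Suc k) (Suc m) = (u, v)" by (cases "Zc (Suc k) (Suc m)")
  obtain u' v' where uv': "Zc (Suc (Suc k)) m = (u', v')" by (cases "Zc (Suc (Suc k)) m")
  have "v = u'" using uv uv' by simp
  moreover have "u \<ge> 1" using Zc_ge1[of "Suc k" "Suc m"] uv by simp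
  ultimately show ?thesis using uv uv' by simp
qed

lemma Zc_low: "fst (Zc (Suc (2*a)) (2*j + r)) \<ge> fact (a + j) / fact a * fst (Zc (Suc (2*(a+j))) r)"
proof (induction j arbitrary: a)
  case 0 then show ?case by simp
next
  case (Suc j)
  have e: "2 * Suc j + r = Suc (Suc (2*j + r))" by simp
  have "fst (Zc (Suc (2*a)) (2 * Suc j + r)) \<ge> bseq (Suc (2*a)) * fst (Zc (Suc (2*Suc a)) (2*j + r))"
    unfolding e using Zc_two[of "Suc (2*a)" "2*j+r"] by simp
  moreover have "fst (Zc (Suc (2*Suc a)) (2*j + r)) \<ge> fact (Suc a + j) / fact (Suc a) * fst (Zc (Suc (2*(Suc a+j))) r)"
    using Suc.IH[of "Suc a"] .
  ultimately have "fst (Zc (Suc (2*a)) (2 * Suc j + r)) \<ge>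
      real (Suc a) * (fact (Suc a + j) / fact (Suc a) * fst (Zc (Suc (2*(Suc a+j))) r))"
    by (smt (verit, best) bseq_odd mult_left_mono of_nat_0_le_iff)
  moreover have "real (Suc a) * (fact (Suc a + j) / fact (Suc a)) = fact (a + Suc j) / fact a"
    by (simp add: fact_Suc del: of_nat_Suc)
  ultimately show ?case by (simp add: mult.assoc[symmetric] del: of_nat_Suc)
qed

lemma PP_even: "PP (2*j) = (fact j)^2"
proof (induction j)
  case 0 then show ?case by simp
next
  case (Suc j)
  have e: "2 * Suc j = Suc (Suc (2*j))" by simp
  show ?case unfolding e using Suc bseq_odd[of j] bseq_even[of j]
    by (simp add: fact_Suc power2_eq_square del: of_nat_Suc)
qed

lemma PP_odd: "PP (Suc (2*j)) = (fact j)^2 * real (Suc j)"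
  using PP_even[of j] bseq_odd[of j] by simp

lemma R_bound: "\<bar>R N - A_const\<bar> \<le> exp 1 * GG (N div 2) 2"
proof -
  define j where "j = N div 2"
  have fj: "(fact j :: real) > 0" by simp
  have d: "0 < yy N - yy (Suc N)" "yy N - yy (Suc N) \<le> yy N" using diff_pos[of N] yy_pos[of "Suc N"] by auto
  have "\<bar>R N - A_const\<bar> = PP N * (yy N - yy (Suc N)) / fst (Zc 1 N)"
    unfolding R_err using PP_pos[of N] d Zc_ge1[of 1 N] by (simp add: abs_mult)
  also have "\<dots> \<le> exp 1 * GG j 2"
  proof (cases "even N")
    case True
    then have N: "N = 2*j" unfolding j_def by simp
    have low: "fst (Zc 1 N) \<ge> fact j" using Zc_low[of 0 j 0] N by simp
    have "PP N * (yy N - yy (Suc N)) / fst (Zc 1 N) \<le> (fact j)^2 * (exp 1 * GG j 2 / fact j) / fact j"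
      using d low fj PP_pos[of N] unfolding N PP_even yy_even
      by (intro frac_le mult_left_mono) (auto intro!: mult_nonneg_nonneg divide_nonneg_pos less_imp_le[OF GG_pos])
    also have "\<dots> = exp 1 * GG j 2" using fj by (simp add: power2_eq_square)
    finally show ?thesis .
  next
    case False
    then have N: "N = Suc (2*j)" unfolding j_def by presburger
    have "fst (Zc 1 N) \<ge> fact j * fst (Zc (Suc (2*j)) 1)" using Zc_low[of 0 j 1] N by simp
    moreover have "fst (Zc (Suc (2*j)) 1) = 1 + real (Suc j)" using bseq_odd[of j] by simp
    ultimately have low: "fst (Zc 1 N) \<ge> fact j * real (Suc j)"
      by (smt (verit, best) fj mult_left_mono)
    have yN: "yy N \<le> exp 1 * GG j 2 / fact j"
      using yy_rec[of "2*j"] bseq_Suc_pos[of "2*j"] yy_pos[of "Suc (Suc (2*j))"] N yy_even[of j]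
      by (smt (verit) mult_pos_pos)
    have "PP N * (yy N - yy (Suc N)) / fst (Zc 1 N) \<le> ((fact j)^2 * real (Suc j)) * (exp 1 * GG j 2 / fact j) / (fact j * real (Suc j))"
      using d low fj PP_pos[of N] yN unfolding N PP_odd
      by (intro frac_le mult_left_mono) (auto intro!: mult_nonneg_nonneg divide_nonneg_pos less_imp_le[OF GG_pos])
    also have "\<dots> = exp 1 * GG j 2" using fj by (simp add: power2_eq_square del: of_nat_Suc)
    finally show ?thesis .
  qed
  finally show ?thesis unfolding j_def .
qed

lemma div2_lim: "filterlim (\<lambda>N::nat. N div 2) at_top sequentially"
  unfolding filterlim_at_top eventually_sequentially
proof
  fix Z :: nat
  show "\<exists>N. \<forall>n\<ge>N. Z \<le> n div 2"
    by (rule exI[of _ "2*Z"]) auto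
qed

lemma GG_lim: "(\<lambda>N. GG (N div 2) 2) \<longlonglongrightarrow> 0"
proof -
  have "(\<lambda>N. integral {0..1} (gg (N div 2) 2)) \<longlonglongrightarrow> integral {0..1} (\<lambda>x::real. 0)"
  proof (rule dominated_convergence(2)[where h="gg 0 2"])
    show "\<And>k. gg (k div 2) 2 integrable_on {0..1}" by (rule int_gg) simp
    show "gg 0 2 integrable_on {0..1}" by (rule int_gg) simp
    fix x :: real assume x: "x \<in> {0..1}"
    show "norm (gg (k div 2) 2 x) \<le> gg 0 2 x" for k
    proof -
      have "0 \<le> (1 - x) ^ (k div 2)" "(1 - x) ^ (k div 2) \<le> 1" using x by (auto intro: power_le_one)
      have e1: "gg (k div 2) 2 x = exp (- 1 / x) / x^2 * (1 - x) ^ (k div 2)"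
        and e2: "gg 0 2 x = exp (- 1 / x) / x^2" by (simp_all add: gg_def)
      have "0 \<le> exp (- 1 / x) / x^2" by simp
      then have "exp (- 1 / x) / x^2 * (1 - x) ^ (k div 2) \<le> exp (- 1 / x) / x^2"
        using \<open>(1 - x) ^ (k div 2) \<le> 1\<close> by (rule mult_left_le[rotated])
      moreover have "norm (gg (k div 2) 2 x) = gg (k div 2) 2 x" using gg_nonneg[OF x] by simp
      ultimately show ?thesis unfolding e2 by (simp only: e1)
    qed
    show "(\<lambda>k. gg (k div 2) 2 x) \<longlonglongrightarrow> 0"
    proof (cases "x = 0")
      case True then show ?thesis by (simp add: gg_def)
    next
      case False
      then have "\<bar>1 - x\<bar> < 1" using x by auto
      then have "(\<lambda>n. (1 - x) ^ n) \<longlonglongrightarrow> 0" by (intro LIMSEQ_power_zero) simp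
      then have "(\<lambda>k. (1 - x) ^ (k div 2)) \<longlonglongrightarrow> 0" by (rule filterlim_compose[OF _ div2_lim])
      then have "(\<lambda>k. exp (- 1 / x) * (1 - x) ^ (k div 2) / x ^ 2) \<longlonglongrightarrow> exp (- 1 / x) * 0 / x ^ 2"
        by (intro tendsto_intros) (use False in auto)
      then show ?thesis by (simp add: gg_def)
    qed
  qed
  then show ?thesis by (simp add: GG_def)
qed

theorem mainTheorem4:
  shows "R \<longlonglongrightarrow> A_const
    \<and> (\<forall>N. even N \<longrightarrow> R N > A_const)
    \<and> (\<forall>N. odd N \<longrightarrow> R N < A_const)"
proof (intro conjI allI impI)
  have L: "(\<lambda>N. exp 1 * GG (N div 2) 2) \<longlonglongrightarrow> 0" by (intro tendsto_mult_right_zero GG_lim)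
  have Ev: "eventually (\<lambda>N. norm (R N - A_const) \<le> exp 1 * GG (N div 2) 2) sequentially"
    using R_bound by simp
  have "(\<lambda>N. R N - A_const) \<longlonglongrightarrow> 0"
    by (rule Lim_null_comparison[OF Ev L])
  then show "R \<longlonglongrightarrow> A_const" by (simp add: LIM_zero_iff)
next
  fix N :: nat
  have pos: "PP N * (yy N - yy (Suc N)) / fst (Zc 1 N) > 0"
    using PP_pos[of N] diff_pos[of N] Zc_ge1[of 1 N] by simp
  define E where "E = PP N * (yy N - yy (Suc N)) / fst (Zc 1 N)"
  have RE: "R N - A_const = (-1) ^ N * E" unfolding E_def R_err by simp
  have posE: "E > 0" using pos unfolding E_def .
  { assume "even N" then have "(-1::real) ^ N = 1" by simp
    then have "R N - A_const = E" using RE by simp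
    then show "R N > A_const" using posE by linarith }
  { assume "odd N" then have "(-1::real) ^ N = -1" by simp
    then have "R N - A_const = - E" using RE by simp
    then show "R N < A_const" using posE by linarith }
qed

end
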